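(* Let $M\in\mathbb{R}^{m\times m}$ be symmetric positive definite, let $\delta_1,\dots,\delta_{s+1}>0$, $\Delta=\mathrm{diag}(\delta_1,\dots,\delta_s)$ and $\Delta_{\mathrm{new}}=\mathrm{diag}(\delta_1,\dots,\delta_{s+1})$, and let $U\in\mathbb{R}^{m\times s}$. Suppose $U\Delta=V\Sigma W^*$ is the exact core SVD of $U\Delta:\mathbb{R}^s_\Delta\to\mathbb{R}^m_M$, where $V\in\mathbb{R}^{m\times k}$ with $V^TMV=I$, $W\in\mathbb{R}^{s\times k}$ with $W^T\Delta W=I$, $W^*=W^T\Delta$, and $\Sigma\in\mathbb{R}^{k\times k}$. Let $c\in\mathbb{R}^m$ and define $$h=c-VV^*c,\quad p=\|h\|_M,\quad Q=\begin{bmatrix}\Sigma&\delta_{s+1}^{1/2}V^*c\\0&\delta_{s+1}^{1/2}p\end{bmatrix}\in\mathbb{R}^{(k+1)\times(k+1)},$$ where $V^*=V^TM$. If $p>0$ and the standard core SVD of $Q$ is $Q=V_Q\Sigma_QW_Q^T$, then the core SVD of $[\,U\ c\,]\Delta_{\mathrm{new}}:\mathbb{R}^{s+1}_{\Delta_{\mathrm{new}}}\to\mathbb{R}^m_M$ is given by $$[\,U\ c\,]\Delta_{\mathrm{new}}=V_{\mathrm{new}}\Sigma_QW_{\mathrm{new}}^*,$$ where $V_{\mathrm{new}}=[\,V\ j\,]V_Q$ with $j=h/p$, $W_{\mathrm{new}}=W_uW_Q$ with $W_u=\begin{bmatrix}W&0\\0&\delta_{s+1}^{-1/2}\end{bmatrix}$,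 and $W_{\mathrm{new}}^*=W_{\mathrm{new}}^T\Delta_{\mathrm{new}}$.
   Context: For symmetric positive definite $M$, $\mathbb{R}^m_M$ is $\mathbb{R}^m$ with inner product $(x,y)_M=y^TMx$ and norm $\|x\|_M=(x^TMx)^{1/2}$; similarly for $\mathbb{R}^s_\Delta$. For a matrix $A:\mathbb{R}^s_\Delta\to\mathbb{R}^m_M$ the Hilbert adjoint is $A^*=\Delta^{-1}A^TM$. If $A$ has exactly $k$ positive singular values $\sigma_1\ge\cdots\ge\sigma_k>0$, a core SVD of $A$ is a factorization $A=V\Sigma W^*$ with $\Sigma=\mathrm{diag}(\sigma_1,\dots,\sigma_k)$, $V\in\mathbb{R}^{m\times k}$ whose columns are $M$-orthonormal eigenvectors of $AA^*$, $W\in\mathbb{R}^{s\times k}$ whose columns are $\Delta$-orthonormal eigenvectors of $A^*A$, satisfying $AW=V\Sigma$, $A^*V=W\Sigma$, and $W^*=W^T\Delta$. The standard core SVD is the case where both inner products are the standard unweighted ones. *)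

theory Defs
  imports "Jordan_Normal_Form.Gauss_Jordan_Elimination"
begin

definition spd_mat :: "nat \<Rightarrow> real mat \<Rightarrow> bool" where
  "spd_mat n M \<longleftrightarrow> M \<in> carrier_mat n n \<and> transpose_mat M = M \<and>
     (\<forall>x \<in> carrier_vec n. x \<noteq> 0\<^sub>v n \<longrightarrow> x \<bullet> (M *\<^sub>v x) > 0)"

definition wnorm :: "real mat \<Rightarrow> real vec \<Rightarrow> real" where
  "wnorm M x = sqrt (x \<bullet> (M *\<^sub>v x))"

text \<open>Hilbert adjoint of A : R^s_D -> R^m_M, namely D^{-1} A^T M.\<close>
definition hadj :: "real mat \<Rightarrow> real mat \<Rightarrow> real mat \<Rightarrow> real mat" where
  "hadj D M A = the (mat_inverse D) * transpose_mat A * M"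

definition core_svd :: "real mat \<Rightarrow> real mat \<Rightarrow> real mat \<Rightarrow> real mat \<Rightarrow> real mat \<Rightarrow> real mat \<Rightarrow> nat \<Rightarrow> bool" where
  "core_svd M D A V S W k \<longleftrightarrow>
     (let m = dim_row A; s = dim_col A in
       M \<in> carrier_mat m m \<and> D \<in> carrier_mat s s \<and>
       V \<in> carrier_mat m k \<and> W \<in> carrier_mat s k \<and> S \<in> carrier_mat k k \<and>
       (\<exists>\<sigma>. S = mat_diag k \<sigma> \<and> (\<forall>i<k. \<sigma> i > 0) \<and> (\<forall>i j. i \<le> j \<longrightarrow> j < k \<longrightarrow> \<sigma> j \<le> \<sigma> i)) \<and>
       transpose_mat V * M * V = 1\<^sub>m k \<and>
       transpose_mat W * D * W = 1\<^sub>m k \<and>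
       A * hadj D M A * V = V * (S * S) \<and>
       hadj D M A * A * W = W * (S * S) \<and>
       A * W = V * S \<and>
       hadj D M A * V = W * S \<and>
       A = V * S * (transpose_mat W * D))"

end

theory Submission
  imports Defs
begin

lemma mat_inverse_Some_diag:
  assumes "\<forall>i<n. (d i :: real) \<noteq> 0"
  shows "\<exists>B. mat_inverse (mat_diag n d) = Some B"
proof (cases "mat_inverse (mat_diag n d)")
  case None
  from mat_inverse(1)[OF mat_diag_dim None, of undefined]
  have "mat_diag n d \<notin> Units (ring_mat TYPE(real) n undefined)" .
  moreover have "mat_diag n d \<in> Units (ring_mat TYPE(real) n undefined)"
  proof -
    have e: "mat_diag n (\<lambda>i. (1 / d i) * d i) = 1\<^sub>m n" "mat_diag n (\<lambda>i. d i * (1 / d i)) = 1\<^sub>m n"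
      using assms by (auto intro!: eq_matI simp: mat_diag_def)
    show ?thesis unfolding Units_def ring_mat_def
      apply (simp)
      apply (rule bexI[of _ "mat_diag n (\<lambda>i. 1 / d i)"])
      using e by auto
  qed
  ultimately show ?thesis by blast
qed auto

lemma assoc_dim: "dim_col (A :: 'a :: semiring_0 mat) = dim_row B \<Longrightarrow> dim_col B = dim_row C \<Longrightarrow> A * B * C = A * (B * C)"
  by (rule assoc_mult_mat[of A "dim_row A" "dim_col A" B "dim_col B" C "dim_col C"]; (intro carrier_matI)?; simp)

lemma core_svd_intro:
  fixes M D A Vn S Wn :: "real mat"
  assumes A: "A \<in> carrier_mat m n" and Mc: "M \<in> carrier_mat m m" and Ms: "transpose_mat M = M"
    and Dc: "D \<in> carrier_mat n n" and Ds: "transpose_mat D = D"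
    and Di: "mat_inverse D = Some Di"
    and Vc: "Vn \<in> carrier_mat m k" and Wc: "Wn \<in> carrier_mat n k"
    and S: "S = mat_diag k \<sigma>" "\<forall>i<k. \<sigma> i > 0" "\<forall>i j. i \<le> j \<longrightarrow> j < k \<longrightarrow> \<sigma> j \<le> \<sigma> i"
    and VMV: "transpose_mat Vn * M * Vn = 1\<^sub>m k"
    and WDW: "transpose_mat Wn * D * Wn = 1\<^sub>m k"
    and Aeq: "A = Vn * S * (transpose_mat Wn * D)"
  shows "core_svd M D A Vn S Wn k"
proof -
  from mat_inverse(2)[OF Dc Di] have DiD: "Di * D = 1\<^sub>m n" and Dic: "Di \<in> carrier_mat n n" by auto
  have Sc: "S \<in> carrier_mat k k" using S by simp
  have VT: "transpose_mat Vn \<in> carrier_mat k m" using Vc by (simp add: transpose_carrier_mat)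
  have WT: "transpose_mat Wn \<in> carrier_mat k n" using Wc by (simp add: transpose_carrier_mat)
  note dims0 = carrier_matD[OF Vc] carrier_matD[OF Wc] carrier_matD[OF Mc] carrier_matD[OF Dc] carrier_matD[OF Dic]
    carrier_matD[OF Sc]
  have St: "transpose_mat S = S" using S by (auto intro!: eq_matI simp: mat_diag_def)
  have VMV': "dim_row X = k \<Longrightarrow> transpose_mat Vn * (M * (Vn * X)) = X" for X
  proof -
    assume "dim_row X = k" then have X: "X \<in> carrier_mat k (dim_col X)" by (intro carrier_matI) auto
    have "transpose_mat Vn * (M * (Vn * X)) = (transpose_mat Vn * M * Vn) * X"
      by (simp only: assoc_mult_mat[OF mult_carrier_mat[OF VT Mc] Vc X] assoc_mult_mat[OF VT Mc mult_carrier_mat[OF Vc X]])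
    also have "\<dots> = X" by (simp only: VMV left_mult_one_mat[OF X])
    finally show ?thesis .
  qed
  have WDW': "dim_row X = k \<Longrightarrow> transpose_mat Wn * (D * (Wn * X)) = X" for X
  proof -
    assume "dim_row X = k" then have X: "X \<in> carrier_mat k (dim_col X)" by (intro carrier_matI) auto
    have "transpose_mat Wn * (D * (Wn * X)) = (transpose_mat Wn * D * Wn) * X"
      by (simp only: assoc_mult_mat[OF mult_carrier_mat[OF WT Dc] Wc X] assoc_mult_mat[OF WT Dc mult_carrier_mat[OF Wc X]])
    also have "\<dots> = X" by (simp only: WDW left_mult_one_mat[OF X])
    finally show ?thesis .
  qed
  have VMVr: "transpose_mat Vn * (M * Vn) = 1\<^sub>m k"
    using VMV by (simp only: assoc_mult_mat[OF VT Mc Vc])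
  have WDWr: "transpose_mat Wn * (D * Wn) = 1\<^sub>m k"
    using WDW by (simp only: assoc_mult_mat[OF WT Dc Wc])
  have DiD': "dim_row X = n \<Longrightarrow> Di * (D * X) = X" for X
  proof -
    assume "dim_row X = n" then have X: "X \<in> carrier_mat n (dim_col X)" by (intro carrier_matI) auto
    have "Di * (D * X) = (Di * D) * X" by (simp only: assoc_mult_mat[OF Dic Dc X])
    also have "\<dots> = X" by (simp only: DiD left_mult_one_mat[OF X])
    finally show ?thesis .
  qed
  have At: "transpose_mat A = D * (Wn * (S * transpose_mat Vn))"
    unfolding Aeq
    using transpose_mult[OF mult_carrier_mat[OF Vc Sc] mult_carrier_mat[OF WT Dc]]
     transpose_mult[OF WT Dc] transpose_mult[OF Vc Sc] assoc_mult_mat[OF Dc Wc mult_carrier_mat[OF Sc VT]]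
    by (simp add: St Ds)
  have H: "hadj D M A = Wn * (S * (transpose_mat Vn * M))"
    unfolding hadj_def Di option.sel At by (simp add: DiD' dims0 assoc_dim)
  have Ar: "A = Vn * (S * (transpose_mat Wn * D))" using Aeq by (simp add: dims0 assoc_dim)
  have dims: "dim_row A = m" "dim_col A = n" using A by auto
  show ?thesis
    unfolding core_svd_def Let_def dims H
    apply (intro conjI)
    subgoal by (rule Mc)
    subgoal by (rule Dc)
    subgoal by (rule Vc)
    subgoal by (rule Wc)
    subgoal by (rule Sc)
    subgoal using S by blast
    subgoal by (rule VMV)
    subgoal by (rule WDW)
    subgoal unfolding Ar by (simp add: VMV' WDW' VMVr WDWr dims0 assoc_dim)
    subgoal unfolding Ar by (simp add: VMV' WDW' VMVr WDWr dims0 assoc_dim)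
    subgoal unfolding Ar by (simp add: VMV' WDW' VMVr WDWr dims0 assoc_dim)
    subgoal by (simp add: VMV' WDW' VMVr WDWr dims0 assoc_dim)
    subgoal by (rule Aeq)
    done
qed



lemma K3_lemma:
  fixes W :: "real mat" and \<delta> :: "nat \<Rightarrow> real"
  assumes Wc: "W \<in> carrier_mat s k" and WDW: "transpose_mat W * mat_diag s \<delta> * W = 1\<^sub>m k"
    and dpos: "\<delta> s > 0"
  defines "Wu \<equiv> four_block_mat W (0\<^sub>m s 1) (0\<^sub>m 1 k) (mat 1 1 (\<lambda>_. 1 / sqrt (\<delta> s)))"
  shows "transpose_mat Wu * mat_diag (s+1) \<delta> * Wu = 1\<^sub>m (k+1)"
proof -
  have Wuc: "Wu \<in> carrier_mat (s+1) (k+1)" unfolding Wu_def using Wc by auto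
  have WuTc: "transpose_mat Wu \<in> carrier_mat (k+1) (s+1)" using Wuc by (simp add: transpose_carrier_mat)
  have WTc: "transpose_mat W \<in> carrier_mat k s" using Wc by (simp add: transpose_carrier_mat)
  have Went: "Wu $$ (l, a) = (if l < s then if a < k then W $$ (l, a) else 0 else if a < k then 0 else 1 / sqrt (\<delta> s))"
    if "l < s + 1" "a < k + 1" for l a
    unfolding Wu_def using that Wc by auto
  have WuD: "transpose_mat Wu * mat_diag (s+1) \<delta> = mat (k+1) (s+1) (\<lambda>(a,l). Wu $$ (l,a) * \<delta> l)"
    by (subst mat_diag_mult_right[OF WuTc]) (rule eq_matI, use Wuc in auto)
  have WD: "transpose_mat W * mat_diag s \<delta> = mat k s (\<lambda>(a,l). W $$ (l,a) * \<delta> l)"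
    by (subst mat_diag_mult_right[OF WTc]) (rule eq_matI, use Wc in auto)
  have WDWe: "(\<Sum>l<s. W $$ (l,a) * \<delta> l * W $$ (l,b)) = (if a = b then 1 else 0)" if "a < k" "b < k" for a b
  proof -
    have "(transpose_mat W * mat_diag s \<delta> * W) $$ (a,b) = (\<Sum>l<s. W $$ (l,a) * \<delta> l * W $$ (l,b))"
      unfolding WD using that Wc by (simp add: scalar_prod_def atLeast0LessThan)
    then show ?thesis using WDW that by simp
  qed
  have sq: "1 / sqrt (\<delta> s) * \<delta> s * (1 / sqrt (\<delta> s)) = 1" using dpos
    by (simp add: field_simps)
  show ?thesis unfolding WuD
  proof (rule eq_matI)
    fix a b assume ab: "a < dim_row (1\<^sub>m (k+1) :: real mat)" "b < dim_col (1\<^sub>m (k+1) :: real mat)"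
    then have a: "a < k + 1" and b: "b < k + 1" by auto
    have "(mat (k+1) (s+1) (\<lambda>(a,l). Wu $$ (l,a) * \<delta> l) * Wu) $$ (a,b)
       = (\<Sum>l<Suc s. Wu $$ (l,a) * \<delta> l * Wu $$ (l,b))"
      using a b Wuc by (simp add: scalar_prod_def atLeast0LessThan)
    also have "\<dots> = (\<Sum>l<s. Wu $$ (l,a) * \<delta> l * Wu $$ (l,b)) + Wu $$ (s,a) * \<delta> s * Wu $$ (s,b)"
      by (rule sum.lessThan_Suc)
    also have "\<dots> = (if a = b then 1 else 0)"
    proof (cases "a < k")
      case True
      note aT = True
      show ?thesis
      proof (cases "b < k")
        case True
        have "(\<Sum>l<s. Wu $$ (l,a) * \<delta> l * Wu $$ (l,b)) = (\<Sum>l<s. W $$ (l,a) * \<delta> l * W $$ (l,b))"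
          by (rule sum.cong, use a b aT True in \<open>auto simp: Went\<close>)
        then show ?thesis using WDWe[OF aT True] a b aT True by (simp add: Went)
      next
        case False
        then have bk: "b = k" using b by auto
        have "(\<Sum>l<s. Wu $$ (l,a) * \<delta> l * Wu $$ (l,b)) = 0"
          by (rule sum.neutral, use a b aT bk in \<open>auto simp: Went\<close>)
        then show ?thesis using a b aT bk by (simp add: Went)
      qed
    next
      case False
      then have ak: "a = k" using a by auto
      have "(\<Sum>l<s. Wu $$ (l,a) * \<delta> l * Wu $$ (l,b)) = 0"
        by (rule sum.neutral, use a b ak in \<open>auto simp: Went\<close>)
      then show ?thesis using a b ak sq by (auto simp: Went)
    qed
    also have "\<dots> = 1\<^sub>m (k+1) $$ (a,b)" using a b by simp
    finally show "(mat (k+1) (s+1) (\<lambda>(a,l). Wu $$ (l,a) * \<delta> l) * Wu) $$ (a,b) = 1\<^sub>m (k+1) $$ (a,b)" .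
  qed (use Wuc in auto)
qed



lemma LG:
  fixes A B M :: "real mat"
  assumes A: "A \<in> carrier_mat m p" and B: "B \<in> carrier_mat m q" and Mc: "M \<in> carrier_mat m m"
    and a: "a < p" and b: "b < q"
  shows "(transpose_mat A * M * B) $$ (a,b) = col A a \<bullet> (M *\<^sub>v col B b)"
proof -
  have AT: "transpose_mat A \<in> carrier_mat p m" using A by (simp add: transpose_carrier_mat)
  have "transpose_mat A * M * B = transpose_mat A * (M * B)" by (rule assoc_mult_mat[OF AT Mc B])
  moreover have "(transpose_mat A * (M * B)) $$ (a,b) = row (transpose_mat A) a \<bullet> col (M * B) b"
    using AT B Mc a b by (subst index_mult_mat(1)) auto
  moreover have "row (transpose_mat A) a = col A a" using A a by simp
  moreover have "col (M * B) b = M *\<^sub>v col B b" by (rule col_mult2[OF Mc B b])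
  ultimately show ?thesis by simp
qed

lemma K2_lemma:
  fixes M V :: "real mat" and c :: "real vec" and m k :: nat
  defines "Vsc \<equiv> transpose_mat V * M *\<^sub>v c"
  defines "h \<equiv> c - V *\<^sub>v Vsc"
  defines "p \<equiv> wnorm M h"
  defines "j \<equiv> (1 / p) \<cdot>\<^sub>v h"
  defines "Vj \<equiv> mat m (k + 1) (\<lambda>(i, l). if l < k then V $$ (i, l) else j $ i)"
  assumes Mc: "M \<in> carrier_mat m m" and Ms: "transpose_mat M = M"
    and Vc: "V \<in> carrier_mat m k" and c: "c \<in> carrier_vec m"
    and VMV: "transpose_mat V * M * V = 1\<^sub>m k" and ppos: "p > 0"
  shows "transpose_mat Vj * M * Vj = 1\<^sub>m (k+1)"
proof -
  have VT: "transpose_mat V \<in> carrier_mat k m" using Vc by (simp add: transpose_carrier_mat)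
  have VTM: "transpose_mat V * M \<in> carrier_mat k m" using mult_carrier_mat[OF VT Mc] .
  have Vscc: "Vsc \<in> carrier_vec k" unfolding Vsc_def using mult_mat_vec_carrier[OF VTM c] .
  have VVc: "V *\<^sub>v Vsc \<in> carrier_vec m" using mult_mat_vec_carrier[OF Vc Vscc] .
  have hc: "h \<in> carrier_vec m" unfolding h_def using c VVc by simp
  have jc: "j \<in> carrier_vec m" unfolding j_def using hc by simp
  have Vjc: "Vj \<in> carrier_mat m (k+1)" unfolding Vj_def by simp
  have colV: "col V a \<in> carrier_vec m" if "a < k" for a using Vc that by simp
  have sym: "x \<bullet> (M *\<^sub>v y) = y \<bullet> (M *\<^sub>v x)" if x: "x \<in> carrier_vec m" and y: "y \<in> carrier_vec m" for x y
  proof -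
    have "(transpose_mat M *\<^sub>v x) \<bullet> y = x \<bullet> (M *\<^sub>v y)" by (rule transpose_vec_mult_scalar[OF Mc y x])
    then have "x \<bullet> (M *\<^sub>v y) = (M *\<^sub>v x) \<bullet> y" using Ms by simp
    also have "\<dots> = y \<bullet> (M *\<^sub>v x)" by (rule comm_scalar_prod[OF mult_mat_vec_carrier[OF Mc x] y])
    finally show ?thesis .
  qed
  have colVj: "col Vj b = (if b < k then col V b else j)" if "b < k + 1" for b
    unfolding Vj_def using that Vc jc by (auto intro!: eq_vecI)
  have VV: "col V a \<bullet> (M *\<^sub>v col V b) = (if a = b then 1 else 0)" if "a < k" "b < k" for a b
    using LG[OF Vc Vc Mc that] VMV that by simp
  have VTx: "(transpose_mat V *\<^sub>v x) $ a = col V a \<bullet> x" if "a < k" for a x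
    using that Vc by simp
  have VMh: "col V a \<bullet> (M *\<^sub>v h) = 0" if a: "a < k" for a
  proof -
    have e1: "transpose_mat V *\<^sub>v (M *\<^sub>v c) = Vsc"
      unfolding Vsc_def by (rule assoc_mult_mat_vec[OF VT Mc c, symmetric])
    have "transpose_mat V *\<^sub>v (M *\<^sub>v (V *\<^sub>v Vsc)) = (transpose_mat V * M * V) *\<^sub>v Vsc"
      using assoc_mult_mat_vec[OF VTM Vc Vscc] assoc_mult_mat_vec[OF VT Mc VVc] by simp
    also have "\<dots> = Vsc" using VMV Vscc by simp
    finally have e2: "transpose_mat V *\<^sub>v (M *\<^sub>v (V *\<^sub>v Vsc)) = Vsc" .
    have "M *\<^sub>v h = M *\<^sub>v c - M *\<^sub>v (V *\<^sub>v Vsc)"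
      unfolding h_def by (rule mult_minus_distrib_mat_vec[OF Mc c VVc])
    then have "transpose_mat V *\<^sub>v (M *\<^sub>v h) = transpose_mat V *\<^sub>v (M *\<^sub>v c) - transpose_mat V *\<^sub>v (M *\<^sub>v (V *\<^sub>v Vsc))"
      using mult_minus_distrib_mat_vec[OF VT mult_mat_vec_carrier[OF Mc c] mult_mat_vec_carrier[OF Mc VVc]] by simp
    also have "\<dots> = 0\<^sub>v k" unfolding e1 e2 using Vscc by simp
    finally have "(transpose_mat V *\<^sub>v (M *\<^sub>v h)) $ a = 0" using a by simp
    then show ?thesis using VTx[OF a] by simp
  qed
  have hMh: "h \<bullet> (M *\<^sub>v h) = p ^ 2"
  proof -
    have "p = sqrt (h \<bullet> (M *\<^sub>v h))" unfolding p_def wnorm_def ..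
    moreover from this ppos have "h \<bullet> (M *\<^sub>v h) > 0" by (metis real_sqrt_le_0_iff not_le)
    ultimately show ?thesis by simp
  qed
  have Mj: "M *\<^sub>v j = (1/p) \<cdot>\<^sub>v (M *\<^sub>v h)" unfolding j_def by (rule mult_mat_vec[OF Mc hc])
  have Mhc: "M *\<^sub>v h \<in> carrier_vec m" using mult_mat_vec_carrier[OF Mc hc] .
  have VMj: "col V a \<bullet> (M *\<^sub>v j) = 0" if a: "a < k" for a
    unfolding Mj using scalar_prod_smult_distrib[OF colV[OF a] Mhc] VMh[OF a] by simp
  have jMV: "j \<bullet> (M *\<^sub>v col V a) = 0" if a: "a < k" for a
    using sym[OF jc colV[OF a]] VMj[OF a] by simp
  have jMj: "j \<bullet> (M *\<^sub>v j) = 1"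
  proof -
    have "j \<bullet> (M *\<^sub>v j) = (1/p) * ((1/p) * (h \<bullet> (M *\<^sub>v h)))"
      unfolding Mj using scalar_prod_smult_distrib[OF jc Mhc] smult_scalar_prod_distrib[OF hc Mhc]
      unfolding j_def by simp
    also have "\<dots> = 1" using hMh ppos by (simp add: power2_eq_square)
    finally show ?thesis .
  qed
  show ?thesis
  proof (rule eq_matI)
    fix a b assume "a < dim_row (1\<^sub>m (k+1) :: real mat)" "b < dim_col (1\<^sub>m (k+1) :: real mat)"
    then have a: "a < k + 1" and b: "b < k + 1" by auto
    have "(transpose_mat Vj * M * Vj) $$ (a,b) = col Vj a \<bullet> (M *\<^sub>v col Vj b)"
      by (rule LG[OF Vjc Vjc Mc a b])
    also have "\<dots> = 1\<^sub>m (k+1) $$ (a,b)"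
      unfolding colVj[OF a] colVj[OF b] using a b VV VMj jMV jMj by auto
    finally show "(transpose_mat Vj * M * Vj) $$ (a,b) = 1\<^sub>m (k+1) $$ (a,b)" .
  qed (use Vjc Mc in auto)
qed



lemma K1_lemma:
  fixes m s k :: nat and M U V \<Sigma> W :: "real mat" and \<delta> :: "nat \<Rightarrow> real" and c :: "real vec"
  defines "\<Delta> \<equiv> mat_diag s \<delta>"
    and "\<Delta>new \<equiv> mat_diag (s + 1) \<delta>"
    and "Vsc \<equiv> transpose_mat V * M *\<^sub>v c"
  defines "h \<equiv> c - V *\<^sub>v Vsc"
  defines "p \<equiv> wnorm M h"
  defines "Q \<equiv> four_block_mat \<Sigma> (mat k 1 (\<lambda>(i, _). sqrt (\<delta> s) * Vsc $ i))
                              (0\<^sub>m 1 k) (mat 1 1 (\<lambda>_. sqrt (\<delta> s) * p))"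
    and "j \<equiv> (1 / p) \<cdot>\<^sub>v h"
    and "Uc \<equiv> mat m (s + 1) (\<lambda>(i, l). if l < s then U $$ (i, l) else c $ i)"
  defines "Vj \<equiv> mat m (k + 1) (\<lambda>(i, l). if l < k then V $$ (i, l) else j $ i)"
    and "Wu \<equiv> four_block_mat W (0\<^sub>m s 1) (0\<^sub>m 1 k) (mat 1 1 (\<lambda>_. 1 / sqrt (\<delta> s)))"
  assumes Mc: "M \<in> carrier_mat m m" and Vc: "V \<in> carrier_mat m k" and Wc: "W \<in> carrier_mat s k"
    and Sc: "\<Sigma> \<in> carrier_mat k k" and U: "U \<in> carrier_mat m s" and c: "c \<in> carrier_vec m"
    and Aeq: "U * \<Delta> = V * \<Sigma> * (transpose_mat W * \<Delta>)" and ppos: "p > 0" and dpos: "\<delta> s > 0"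
  shows "Vj * Q * (transpose_mat Wu * \<Delta>new) = Uc * \<Delta>new"
proof -
  have VT: "transpose_mat V \<in> carrier_mat k m" using Vc by (simp add: transpose_carrier_mat)
  have VTM: "transpose_mat V * M \<in> carrier_mat k m" using mult_carrier_mat[OF VT Mc] .
  have Vscc: "Vsc \<in> carrier_vec k" unfolding Vsc_def using mult_mat_vec_carrier[OF VTM c] .
  have VVc: "V *\<^sub>v Vsc \<in> carrier_vec m" using mult_mat_vec_carrier[OF Vc Vscc] .
  have hc: "h \<in> carrier_vec m" unfolding h_def using c VVc by simp
  have jc: "j \<in> carrier_vec m" unfolding j_def using hc by simp
  have Vjc: "Vj \<in> carrier_mat m (k+1)" unfolding Vj_def by simp
  have Qc: "Q \<in> carrier_mat (k+1) (k+1)" unfolding Q_def using Sc by auto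
  have Wuc: "Wu \<in> carrier_mat (s+1) (k+1)" unfolding Wu_def using Wc by auto
  have WuTc: "transpose_mat Wu \<in> carrier_mat (k+1) (s+1)" using Wuc by (simp add: transpose_carrier_mat)
  have WTc: "transpose_mat W \<in> carrier_mat k s" using Wc by (simp add: transpose_carrier_mat)
  have Ucc: "Uc \<in> carrier_mat m (s+1)" unfolding Uc_def by simp
  have VSc: "V * \<Sigma> \<in> carrier_mat m k" using mult_carrier_mat[OF Vc Sc] .
  have Went: "Wu $$ (l, a) = (if l < s then if a < k then W $$ (l, a) else 0 else if a < k then 0 else 1 / sqrt (\<delta> s))"
    if "l < s + 1" "a < k + 1" for l a
    unfolding Wu_def using that Wc by auto
  have Qent: "Q $$ (l, b) = (if l < k then if b < k then \<Sigma> $$ (l, b) else sqrt (\<delta> s) * Vsc $ l else if b < k then 0 else sqrt (\<delta> s) * p)"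
    if "l < k + 1" "b < k + 1" for l b
    unfolding Q_def using that Sc by auto
  have Vjent: "Vj $$ (i, l) = (if l < k then V $$ (i, l) else j $ i)" if "i < m" "l < k + 1" for i l
    unfolding Vj_def using that by simp
  define X where "X = mat m (k+1) (\<lambda>(i,b). if b < k then (V * \<Sigma>) $$ (i,b) else sqrt (\<delta> s) * c $ i)"
  have S1: "Vj * Q = X"
  proof (rule eq_matI)
    fix i b assume "i < dim_row X" "b < dim_col X"
    then have i: "i < m" and b: "b < k + 1" unfolding X_def by auto
    have "(Vj * Q) $$ (i,b) = (\<Sum>l<Suc k. Vj $$ (i,l) * Q $$ (l,b))"
      using i b Vjc Qc by (simp add: scalar_prod_def atLeast0LessThan)
    also have "\<dots> = (\<Sum>l<k. Vj $$ (i,l) * Q $$ (l,b)) + Vj $$ (i,k) * Q $$ (k,b)"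
      by (rule sum.lessThan_Suc)
    also have "\<dots> = X $$ (i,b)"
    proof (cases "b < k")
      case True
      have "(\<Sum>l<k. Vj $$ (i,l) * Q $$ (l,b)) = (\<Sum>l<k. V $$ (i,l) * \<Sigma> $$ (l,b))"
        by (rule sum.cong, use i b True in \<open>auto simp: Vjent Qent\<close>)
      also have "\<dots> = (V * \<Sigma>) $$ (i,b)"
        using i True Vc Sc by (simp add: scalar_prod_def atLeast0LessThan)
      finally show ?thesis using i b True unfolding X_def by (simp add: Vjent Qent)
    next
      case False
      then have bk: "b = k" using b by auto
      have "(\<Sum>l<k. Vj $$ (i,l) * Q $$ (l,b)) = (\<Sum>l<k. sqrt (\<delta> s) * (V $$ (i,l) * Vsc $ l))"
        by (rule sum.cong, use i b bk in \<open>auto simp: Vjent Qent\<close>)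
      also have "\<dots> = sqrt (\<delta> s) * (V *\<^sub>v Vsc) $ i"
        using i Vc Vscc by (simp add: scalar_prod_def atLeast0LessThan sum_distrib_left)
      finally have e1: "(\<Sum>l<k. Vj $$ (i,l) * Q $$ (l,b)) = sqrt (\<delta> s) * (V *\<^sub>v Vsc) $ i" .
      have e2: "Vj $$ (i,k) * Q $$ (k,b) = sqrt (\<delta> s) * h $ i"
        using i bk ppos hc by (simp add: Vjent Qent j_def)
      have dv: "dim_vec (V *\<^sub>v Vsc) = m" using Vc by simp
      have e3: "c $ i = (V *\<^sub>v Vsc) $ i + h $ i" unfolding h_def using i dv by (simp add: index_minus_vec(1))
      show ?thesis unfolding e1 e2 X_def using i b bk e3 by (simp add: algebra_simps)
    qed
    finally show "(Vj * Q) $$ (i,b) = X $$ (i,b)" .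
  qed (use Vjc Qc in \<open>auto simp: X_def\<close>)
  have WuD: "transpose_mat Wu * \<Delta>new = mat (k+1) (s+1) (\<lambda>(a,l). Wu $$ (l,a) * \<delta> l)"
    unfolding \<Delta>new_def by (subst mat_diag_mult_right[OF WuTc]) (rule eq_matI, use Wuc in auto)
  have WD: "transpose_mat W * \<Delta> = mat k s (\<lambda>(a,l). W $$ (l,a) * \<delta> l)"
    unfolding \<Delta>_def by (subst mat_diag_mult_right[OF WTc]) (rule eq_matI, use Wc in auto)
  have UD: "U * \<Delta> = mat m s (\<lambda>(i,l). U $$ (i,l) * \<delta> l)"
    unfolding \<Delta>_def by (rule mat_diag_mult_right[OF U])
  have UcD: "Uc * \<Delta>new = mat m (s+1) (\<lambda>(i,l). Uc $$ (i,l) * \<delta> l)"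
    unfolding \<Delta>new_def by (rule mat_diag_mult_right[OF Ucc])
  have S3: "X * (transpose_mat Wu * \<Delta>new) = Uc * \<Delta>new"
    unfolding WuD UcD
  proof (rule eq_matI)
    fix i l assume "i < dim_row (mat m (s+1) (\<lambda>(i,l). Uc $$ (i,l) * \<delta> l))"
      "l < dim_col (mat m (s+1) (\<lambda>(i,l). Uc $$ (i,l) * \<delta> l))"
    then have i: "i < m" and l: "l < s + 1" by auto
    have "(X * mat (k+1) (s+1) (\<lambda>(a,l). Wu $$ (l,a) * \<delta> l)) $$ (i,l)
        = (\<Sum>a<Suc k. X $$ (i,a) * (Wu $$ (l,a) * \<delta> l))"
      using i l by (simp add: X_def scalar_prod_def atLeast0LessThan)
    also have "\<dots> = (\<Sum>a<k. X $$ (i,a) * (Wu $$ (l,a) * \<delta> l)) + X $$ (i,k) * (Wu $$ (l,k) * \<delta> l)"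
      by (rule sum.lessThan_Suc)
    also have "\<dots> = Uc $$ (i,l) * \<delta> l"
    proof (cases "l < s")
      case True
      have "(\<Sum>a<k. X $$ (i,a) * (Wu $$ (l,a) * \<delta> l)) = (\<Sum>a<k. (V * \<Sigma>) $$ (i,a) * (W $$ (l,a) * \<delta> l))"
        by (rule sum.cong, use i l True in \<open>auto simp: Went X_def\<close>)
      also have "\<dots> = (V * \<Sigma> * (transpose_mat W * \<Delta>)) $$ (i,l)"
        unfolding WD using i True carrier_matD[OF Vc] carrier_matD[OF Sc] by (simp add: scalar_prod_def atLeast0LessThan)
      also have "\<dots> = U $$ (i,l) * \<delta> l" unfolding Aeq[symmetric] UD using i True by simp
      finally show ?thesis using i l True by (simp add: Went X_def Uc_def)
    next
      case False
      then have ls: "l = s" using l by auto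
      have "(\<Sum>a<k. X $$ (i,a) * (Wu $$ (l,a) * \<delta> l)) = 0"
        by (rule sum.neutral, use i l ls in \<open>auto simp: Went X_def\<close>)
      moreover have "X $$ (i,k) * (Wu $$ (l,k) * \<delta> l) = c $ i * \<delta> s"
        using i ls dpos by (simp add: Went X_def field_simps)
      ultimately show ?thesis using i ls by (simp add: Uc_def)
    qed
    also have "\<dots> = mat m (s+1) (\<lambda>(i,l). Uc $$ (i,l) * \<delta> l) $$ (i,l)" using i l by simp
    finally show "(X * mat (k+1) (s+1) (\<lambda>(a,l). Wu $$ (l,a) * \<delta> l)) $$ (i,l) = mat m (s+1) (\<lambda>(i,l). Uc $$ (i,l) * \<delta> l) $$ (i,l)" .
  qed (auto simp: X_def)
  show ?thesis unfolding S1 S3 ..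
qed


theorem theorem4p1:
  fixes m s k kQ :: nat
    and M U V \<Sigma> W VQ \<Sigma>Q WQ :: "real mat"
    and \<delta> :: "nat \<Rightarrow> real"
    and c :: "real vec"
  defines "\<Delta> \<equiv> mat_diag s \<delta>"
    and "\<Delta>new \<equiv> mat_diag (s + 1) \<delta>"
    and "Vsc \<equiv> transpose_mat V * M *\<^sub>v c"
  defines "h \<equiv> c - V *\<^sub>v Vsc"
  defines "p \<equiv> wnorm M h"
  defines "Q \<equiv> four_block_mat \<Sigma> (mat k 1 (\<lambda>(i, _). sqrt (\<delta> s) * Vsc $ i))
                              (0\<^sub>m 1 k) (mat 1 1 (\<lambda>_. sqrt (\<delta> s) * p))"
    and "j \<equiv> (1 / p) \<cdot>\<^sub>v h"
    and "Uc \<equiv> mat m (s + 1) (\<lambda>(i, l). if l < s then U $$ (i, l) else c $ i)"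
  defines "Vj \<equiv> mat m (k + 1) (\<lambda>(i, l). if l < k then V $$ (i, l) else j $ i)"
    and "Wu \<equiv> four_block_mat W (0\<^sub>m s 1) (0\<^sub>m 1 k) (mat 1 1 (\<lambda>_. 1 / sqrt (\<delta> s)))"
  defines "Vnew \<equiv> Vj * VQ"
    and "Wnew \<equiv> Wu * WQ"
  assumes M: "spd_mat m M"
    and \<delta>pos: "\<forall>i < s + 1. \<delta> i > 0"
    and U: "U \<in> carrier_mat m s"
    and c: "c \<in> carrier_vec m"
    and svd: "core_svd M \<Delta> (U * \<Delta>) V \<Sigma> W k"
    and ppos: "p > 0"
    and svdQ: "core_svd (1\<^sub>m (k + 1)) (1\<^sub>m (k + 1)) Q VQ \<Sigma>Q WQ kQ"
  shows "core_svd M \<Delta>new (Uc * \<Delta>new) Vnew \<Sigma>Q Wnew kQ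
         \<and> Uc * \<Delta>new = Vnew * \<Sigma>Q * (transpose_mat Wnew * \<Delta>new)"
proof -
  have Mc: "M \<in> carrier_mat m m" and Ms: "transpose_mat M = M" using M unfolding spd_mat_def by auto
  have Dc: "\<Delta> \<in> carrier_mat s s" unfolding \<Delta>_def by simp
  have Dnc: "\<Delta>new \<in> carrier_mat (s+1) (s+1)" unfolding \<Delta>new_def by simp
  have UDc: "U * \<Delta> \<in> carrier_mat m s" using U Dc by simp
  have dUD: "dim_row (U * \<Delta>) = m" "dim_col (U * \<Delta>) = s" using UDc by auto
  from svd[unfolded core_svd_def Let_def dUD]
  have Vc: "V \<in> carrier_mat m k" and Wc: "W \<in> carrier_mat s k" and Sc: "\<Sigma> \<in> carrier_mat k k"
    and VMV: "transpose_mat V * M * V = 1\<^sub>m k" and WDW: "transpose_mat W * \<Delta> * W = 1\<^sub>m k"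
    and Aeq: "U * \<Delta> = V * \<Sigma> * (transpose_mat W * \<Delta>)" by auto
  have dQ: "dim_row Q = k + 1" "dim_col Q = k + 1" unfolding Q_def using Sc by auto
  from svdQ[unfolded core_svd_def Let_def dQ]
  have VQc: "VQ \<in> carrier_mat (k+1) kQ" and WQc: "WQ \<in> carrier_mat (k+1) kQ" and SQc: "\<Sigma>Q \<in> carrier_mat kQ kQ"
    and SQ: "\<exists>\<sigma>. \<Sigma>Q = mat_diag kQ \<sigma> \<and> (\<forall>i<kQ. \<sigma> i > 0) \<and> (\<forall>i j. i \<le> j \<longrightarrow> j < kQ \<longrightarrow> \<sigma> j \<le> \<sigma> i)"
    and VQVQ: "transpose_mat VQ * 1\<^sub>m (k+1) * VQ = 1\<^sub>m kQ" and WQWQ: "transpose_mat WQ * 1\<^sub>m (k+1) * WQ = 1\<^sub>m kQ"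
    and Qeq: "Q = VQ * \<Sigma>Q * (transpose_mat WQ * 1\<^sub>m (k+1))" by auto
  have Vjc: "Vj \<in> carrier_mat m (k+1)" unfolding Vj_def by simp
  have Wuc: "Wu \<in> carrier_mat (s+1) (k+1)" unfolding Wu_def using Wc by auto
  have Ucc: "Uc \<in> carrier_mat m (s+1)" unfolding Uc_def by simp
  have dpos: "\<delta> s > 0" using \<delta>pos by simp
  have K1: "Vj * Q * (transpose_mat Wu * \<Delta>new) = Uc * \<Delta>new"
    unfolding Vj_def Q_def Wu_def \<Delta>new_def Uc_def j_def p_def h_def Vsc_def
    by (rule K1_lemma[OF Mc Vc Wc Sc U c Aeq[unfolded \<Delta>_def] ppos[unfolded p_def h_def Vsc_def] dpos])
  have K2: "transpose_mat Vj * M * Vj = 1\<^sub>m (k+1)"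
    unfolding Vj_def j_def p_def h_def Vsc_def
    by (rule K2_lemma[OF Mc Ms Vc c VMV ppos[unfolded p_def h_def Vsc_def]])
  have K3: "transpose_mat Wu * \<Delta>new * Wu = 1\<^sub>m (k+1)"
    unfolding Wu_def \<Delta>new_def
    by (rule K3_lemma[OF Wc WDW[unfolded \<Delta>_def] dpos])
  note dims = carrier_matD[OF Vjc] carrier_matD[OF VQc] carrier_matD[OF Wuc] carrier_matD[OF WQc]
    carrier_matD[OF Mc] carrier_matD[OF Dnc] carrier_matD[OF SQc]
  have E1: "transpose_mat Vnew * M * Vnew = 1\<^sub>m kQ"
  proof -
    have "transpose_mat Vnew * M * Vnew = transpose_mat VQ * ((transpose_mat Vj * M * Vj) * VQ)"
      unfolding Vnew_def transpose_mult[OF Vjc VQc] by (simp add: assoc_dim dims)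
    also have "\<dots> = 1\<^sub>m kQ" using VQVQ by (simp add: K2 dims)
    finally show ?thesis .
  qed
  have E2: "transpose_mat Wnew * \<Delta>new * Wnew = 1\<^sub>m kQ"
  proof -
    have "transpose_mat Wnew * \<Delta>new * Wnew = transpose_mat WQ * ((transpose_mat Wu * \<Delta>new * Wu) * WQ)"
      unfolding Wnew_def transpose_mult[OF Wuc WQc] by (simp add: assoc_dim dims)
    also have "\<dots> = 1\<^sub>m kQ" using WQWQ by (simp add: K3 dims)
    finally show ?thesis .
  qed
  have E3: "Uc * \<Delta>new = Vnew * \<Sigma>Q * (transpose_mat Wnew * \<Delta>new)"
  proof -
    have "Vnew * \<Sigma>Q * (transpose_mat Wnew * \<Delta>new) = Vj * (VQ * \<Sigma>Q * transpose_mat WQ) * (transpose_mat Wu * \<Delta>new)"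
      unfolding Vnew_def Wnew_def transpose_mult[OF Wuc WQc] by (simp add: assoc_dim dims)
    also have "VQ * \<Sigma>Q * transpose_mat WQ = Q" using Qeq by (simp add: dims)
    finally show ?thesis using K1 by simp
  qed
  have Dnt: "transpose_mat \<Delta>new = \<Delta>new" unfolding \<Delta>new_def by (auto intro!: eq_matI simp: mat_diag_def)
  have "\<forall>i<s+1. \<delta> i \<noteq> 0" using \<delta>pos by auto
  from mat_inverse_Some_diag[OF this] have "\<exists>B. mat_inverse \<Delta>new = Some B"
    unfolding \<Delta>new_def .
  then obtain Di where Di: "mat_inverse \<Delta>new = Some Di" by (elim exE)
  from SQ obtain \<sigma> where \<sigma>all: "\<Sigma>Q = mat_diag kQ \<sigma> \<and> (\<forall>i<kQ. \<sigma> i > 0) \<and> (\<forall>i j. i \<le> j \<longrightarrow> j < kQ \<longrightarrow> \<sigma> j \<le> \<sigma> i)" by (elim exE)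
  note \<sigma> = \<sigma>all[THEN conjunct1] \<sigma>all[THEN conjunct2, THEN conjunct1] \<sigma>all[THEN conjunct2, THEN conjunct2]
  have Vnc: "Vnew \<in> carrier_mat m kQ" unfolding Vnew_def by (rule mult_carrier_mat[OF Vjc VQc])
  have Wnc: "Wnew \<in> carrier_mat (s+1) kQ" unfolding Wnew_def by (rule mult_carrier_mat[OF Wuc WQc])
  have "core_svd M \<Delta>new (Uc * \<Delta>new) Vnew \<Sigma>Q Wnew kQ"
    by (rule core_svd_intro[OF mult_carrier_mat[OF Ucc Dnc] Mc Ms Dnc Dnt Di Vnc Wnc \<sigma> E1 E2 E3])
  with E3 show ?thesis by blast
qed

end
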